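(* Every $2$-connected graph that contains no induced subgraph isomorphic to $P_4$ and no induced subgraph isomorphic to $2K_2$ is cummerbund covered.
   Context: All graphs are finite and simple. $P_4$ is the path on $4$ vertices and $2K_2$ is the graph consisting of two vertex-disjoint edges. A cummerbund of a graph is a longest cycle in it; a graph is cummerbund covered if every vertex lies in some cummerbund. *)

theory Defs
  imports Main
begin

definition simple_graph :: "'a set \<Rightarrow> ('a \<Rightarrow> 'a \<Rightarrow> bool) \<Rightarrow> bool" where
  "simple_graph V E \<longleftrightarrow> finite V \<and> (\<forall>u v. E u v \<longrightarrow> u \<in> V \<and> v \<in> V)
     \<and> (\<forall>u v. E u v \<longrightarrow> E v u) \<and> (\<forall>v. \<not> E v v)"

definition connected_on :: "('a \<Rightarrow> 'a \<Rightarrow> bool) \<Rightarrow> 'a set \<Rightarrow> bool" where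
  "connected_on E S \<longleftrightarrow> S \<noteq> {} \<and>
     (\<forall>u\<in>S. \<forall>v\<in>S. (\<lambda>x y. E x y \<and> x \<in> S \<and> y \<in> S)\<^sup>*\<^sup>* u v)"

definition two_connected :: "'a set \<Rightarrow> ('a \<Rightarrow> 'a \<Rightarrow> bool) \<Rightarrow> bool" where
  "two_connected V E \<longleftrightarrow> card V \<ge> 3 \<and> connected_on E V \<and>
     (\<forall>v\<in>V. connected_on E (V - {v}))"

definition has_induced_P4 :: "'a set \<Rightarrow> ('a \<Rightarrow> 'a \<Rightarrow> bool) \<Rightarrow> bool" where
  "has_induced_P4 V E \<longleftrightarrow> (\<exists>a\<in>V. \<exists>b\<in>V. \<exists>c\<in>V. \<exists>d\<in>V. distinct [a,b,c,d] \<and>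
     E a b \<and> E b c \<and> E c d \<and> \<not> E a c \<and> \<not> E b d \<and> \<not> E a d)"

definition has_induced_2K2 :: "'a set \<Rightarrow> ('a \<Rightarrow> 'a \<Rightarrow> bool) \<Rightarrow> bool" where
  "has_induced_2K2 V E \<longleftrightarrow> (\<exists>a\<in>V. \<exists>b\<in>V. \<exists>c\<in>V. \<exists>d\<in>V. distinct [a,b,c,d] \<and>
     E a b \<and> E c d \<and> \<not> E a c \<and> \<not> E a d \<and> \<not> E b c \<and> \<not> E b d)"

text \<open>A cycle, given as the list of its (distinct) vertices in cyclic order;
  its length is the number of vertices.\<close>
definition is_cycle :: "'a set \<Rightarrow> ('a \<Rightarrow> 'a \<Rightarrow> bool) \<Rightarrow> 'a list \<Rightarrow> bool" where
  "is_cycle V E cs \<longleftrightarrow> length cs \<ge> 3 \<and> distinct cs \<and> set cs \<subseteq> V \<and>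
     (\<forall>i < length cs - 1. E (cs ! i) (cs ! (i + 1))) \<and> E (last cs) (hd cs)"

definition cummerbund :: "'a set \<Rightarrow> ('a \<Rightarrow> 'a \<Rightarrow> bool) \<Rightarrow> 'a list \<Rightarrow> bool" where
  "cummerbund V E cs \<longleftrightarrow> is_cycle V E cs \<and>
     (\<forall>ds. is_cycle V E ds \<longrightarrow> length ds \<le> length cs)"

definition cummerbund_covered :: "'a set \<Rightarrow> ('a \<Rightarrow> 'a \<Rightarrow> bool) \<Rightarrow> bool" where
  "cummerbund_covered V E \<longleftrightarrow> (\<forall>v\<in>V. \<exists>cs. cummerbund V E cs \<and> v \<in> set cs)"

end

theory Submission
  imports Defs
begin

fun wk :: "('a \<Rightarrow> 'a \<Rightarrow> bool) \<Rightarrow> 'a list \<Rightarrow> bool" where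
  "wk E [] = True"
| "wk E [x] = True"
| "wk E (x # y # ys) = (E x y \<and> wk E (y # ys))"

lemma wk_Cons: "wk E (x # xs) = (wk E xs \<and> (xs \<noteq> [] \<longrightarrow> E x (hd xs)))"
  by (cases xs) auto

lemma wk_append:
  "wk E (xs @ ys) = (wk E xs \<and> wk E ys \<and> (xs \<noteq> [] \<and> ys \<noteq> [] \<longrightarrow> E (last xs) (hd ys)))"
  by (induction E xs rule: wk.induct) (auto simp: wk_Cons)

lemma wk_nth: "wk E xs = (\<forall>i < length xs - 1. E (xs ! i) (xs ! Suc i))"
  by (induction E xs rule: wk.induct) (auto simp: All_less_Suc2)

lemma cyc_char:
  "is_cycle V E cs \<longleftrightarrow> 3 \<le> length cs \<and> distinct cs \<and> set cs \<subseteq> V \<and> wk E cs \<and> E (last cs) (hd cs)"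
  unfolding is_cycle_def wk_nth by auto

lemma cyc_rot:
  assumes "is_cycle V E (xs @ ys)" shows "is_cycle V E (ys @ xs)"
proof (cases "xs = [] \<or> ys = []")
  case True then show ?thesis using assms by auto
next
  case False
  then show ?thesis using assms unfolding cyc_char by (auto simp: wk_append)
qed

lemma cyc_len_card:
  assumes "finite V" "is_cycle V E cs" shows "length cs \<le> card V"
  using assms unfolding is_cycle_def
  by (metis card_mono distinct_card)

lemma first_step:
  assumes "R\<^sup>*\<^sup>* a b" "a \<noteq> b" shows "\<exists>c. R a c \<and> R\<^sup>*\<^sup>* c b"
  using assms by (induction rule: converse_rtranclp_induct) auto


lemma replace_front:
  assumes "is_cycle V E (t # ys)" "w \<in> V" "w \<notin> set ys" "E w (hd ys)" "E (last ys) w"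
  shows "is_cycle V E (w # ys)"
  using assms unfolding cyc_char by (auto simp: wk_Cons)

context
  fixes V :: "'a set" and E :: "'a \<Rightarrow> 'a \<Rightarrow> bool"
  assumes sg: "simple_graph V E"
    and tc: "two_connected V E"
    and nP4: "\<not> has_induced_P4 V E"
    and n2K2: "\<not> has_induced_2K2 V E"
begin

lemma EV: "E u w \<Longrightarrow> u \<in> V \<and> w \<in> V"
  using sg unfolding simple_graph_def by blast

lemma Esym: "E u w \<Longrightarrow> E w u"
  using sg unfolding simple_graph_def by blast

lemma Eirr: "\<not> E u u"
  using sg unfolding simple_graph_def by blast

lemma nested:
  assumes "e \<in> V" "f \<in> V" "e \<noteq> f" "\<not> E e f"
  shows "(\<forall>x. E e x \<longrightarrow> E f x) \<or> (\<forall>x. E f x \<longrightarrow> E e x)"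
proof (rule ccontr)
  assume "\<not> ?thesis"
  then obtain x y where x: "E e x" "\<not> E f x" and y: "E f y" "\<not> E e y" by blast
  have xV: "x \<in> V" and yV: "y \<in> V" using x y EV by auto
  have d: "distinct [e, x, y, f]" using x y assms Eirr Esym by auto
  show False
  proof (cases "E x y")
    case True
    have "has_induced_P4 V E"
      unfolding has_induced_P4_def
      apply (rule bexI[where x=e], rule bexI[where x=x], rule bexI[where x=y], rule bexI[where x=f])
      using assms xV yV d x y True Esym by auto
    then show False using nP4 by blast
  next
    case False
    have d2: "distinct [e, x, f, y]" using d by auto
    have "has_induced_2K2 V E"
      unfolding has_induced_2K2_def
      apply (rule bexI[where x=e], rule bexI[where x=x], rule bexI[where x=f], rule bexI[where x=y])
      using assms xV yV d2 x y False Esym by auto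
    then show False using n2K2 by blast
  qed
qed

lemma degree:
  assumes "v \<in> V" shows "\<exists>w. E v w \<and> w \<noteq> u"
proof -
  have c3: "card V \<ge> 3" and fin: "finite V" using tc sg unfolding two_connected_def simple_graph_def by auto
  have "\<not> V \<subseteq> {u, v}"
  proof
    assume "V \<subseteq> {u, v}"
    then have "card V \<le> card {u, v}" by (rule card_mono[rotated]) simp
    also have "\<dots> \<le> 2" by (simp add: card_insert_if)
    finally show False using c3 by simp
  qed
  then obtain z where z: "z \<in> V" "z \<noteq> u" "z \<noteq> v" by blast
  show ?thesis
  proof (cases "u \<in> V \<and> u \<noteq> v")
    case True
    have "connected_on E (V - {u})" using tc True unfolding two_connected_def by blast
    then have "(\<lambda>x y. E x y \<and> x \<in> V - {u} \<and> y \<in> V - {u})\<^sup>*\<^sup>* v z"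
      unfolding connected_on_def using z assms True by blast
    then obtain c where "E v c \<and> v \<in> V - {u} \<and> c \<in> V - {u}"
      using first_step[of _ v z] z by blast
    then show ?thesis by blast
  next
    case False
    have "connected_on E V" using tc unfolding two_connected_def by blast
    then have "(\<lambda>x y. E x y \<and> x \<in> V \<and> y \<in> V)\<^sup>*\<^sup>* v z"
      unfolding connected_on_def using z assms by blast
    then obtain c where "E v c \<and> v \<in> V \<and> c \<in> V"
      using first_step[of _ v z] z by blast
    then show ?thesis using False Eirr by blast
  qed
qed

lemma has_cycle: "\<exists>C. is_cycle V E C"
proof -
  have c3: "card V \<ge> 3" using tc unfolding two_connected_def by auto
  then obtain v where v: "v \<in> V" by fastforce
  obtain u where u: "E v u" using degree[OF v] by blast
  obtain w where w: "E v w" "w \<noteq> u" using degree[OF v, of u] by blast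
  have uV: "u \<in> V" and wV: "w \<in> V" using u w EV by auto
  show ?thesis
  proof (cases "E u w")
    case True
    have "is_cycle V E [v, u, w]" using u w True v uV wV Eirr Esym
      unfolding cyc_char by auto
    then show ?thesis by blast
  next
    case False
    from nested[OF uV wV w(2)[symmetric] False] show ?thesis
    proof
      assume N: "\<forall>x. E u x \<longrightarrow> E w x"
      obtain x where x: "E u x" "x \<noteq> v" using degree[OF uV, of v] by blast
      have "is_cycle V E [v, u, x, w]" using u w x N v uV wV Eirr Esym EV False
        unfolding cyc_char by auto
      then show ?thesis by blast
    next
      assume N: "\<forall>x. E w x \<longrightarrow> E u x"
      obtain x where x: "E w x" "x \<noteq> v" using degree[OF wV, of v] by blast
      have "is_cycle V E [v, w, x, u]" using u w x N v uV wV Eirr Esym EV False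
        unfolding cyc_char by auto
      then show ?thesis by blast
    qed
  qed
qed

lemma main_front:
  assumes C: "is_cycle V E (o1 # R)"
    and lng: "\<forall>D. is_cycle V E D \<longrightarrow> length D \<le> Suc (length R)"
    and v: "v \<in> V" "v \<notin> set (o1 # R)"
    and vo: "E v o1"
    and H: "\<forall>t\<in>set (o1 # R). \<not> E v t \<longrightarrow> (\<forall>x. E v x \<longrightarrow> E t x)"
  shows "\<exists>D. is_cycle V E D \<and> length D = Suc (length R) \<and> v \<in> set D"
proof (rule ccontr)
  assume nd: "\<not> ?thesis"
  have long: "False" if "is_cycle V E D" "length D > Suc (length R)" for D
    using lng that by force
  have ok: "False" if "is_cycle V E D" "length D = Suc (length R)" "v \<in> set D" for D
    using nd that by blast
  have ov: "E o1 v" using vo Esym by blast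
  from C have cR: "3 \<le> Suc (length R)" "distinct (o1 # R)" "set (o1 # R) \<subseteq> V"
      "wk E (o1 # R)" "E (last (o1 # R)) o1"
    by (simp_all add: cyc_char)
  have Rne: "R \<noteq> []" using cR(1) by auto
  have h1: "\<not> E v (hd R)"
  proof
    assume a: "E v (hd R)"
    have "is_cycle V E (o1 # v # R)" using C v ov a Rne unfolding cyc_char
      by (auto simp: wk_Cons)
    then show False using long by force
  qed
  have hl: "\<not> E v (last R)"
  proof
    assume a: "E v (last R)"
    have "is_cycle V E (o1 # R @ [v])" using C v vo a Rne Esym[OF a] unfolding cyc_char
      by (auto simp: wk_Cons wk_append hd_append)
    then show False using long by force
  qed
  show False
  proof (cases "\<exists>o2\<in>set R. E v o2")
    case True
    obtain R1 o2 R2 where sp: "R = R1 @ o2 # R2" "E v o2" "\<forall>x\<in>set R1. \<not> E v x"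
      using split_list_first_prop[OF True] by blast
    have o2v: "E o2 v" using sp(2) Esym by blast
    have R1ne: "R1 \<noteq> []" using h1 sp by auto
    have R2ne: "R2 \<noteq> []" using hl sp by auto
    show False
    proof (cases "length R1 = 1")
      case True
      then obtain e where e: "R1 = [e]" by (cases R1) auto
      have "is_cycle V E (o1 # v # o2 # R2)" using C v ov sp e R2ne unfolding cyc_char
        by (auto simp: wk_Cons)
      then show False using ok sp e by force
    next
      case False
      then have "length R1 \<ge> 2" using R1ne by (cases R1) (auto simp: Suc_le_eq)
      then obtain R1' d e where R1: "R1 = R1' @ [d, e]"
        by (cases R1 rule: rev_exhaust; case_tac ys rule: rev_exhaust) auto
      obtain f R2t where R2: "R2 = f # R2t" using R2ne by (cases R2) auto
      show False
      proof (cases "R2t = []")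
        case True
        have "is_cycle V E (o1 # R1 @ [o2, v])" using C v vo sp R2 True R1ne o2v
          unfolding cyc_char by (auto simp: wk_Cons wk_append hd_append)
        then show False using ok sp R2 True by force
      next
        case False
        then obtain g R2' where R2t: "R2t = g # R2'" by (cases R2t) auto
        note eqs = sp(1) R1 R2 R2t
        have nf: "\<not> E v f"
        proof
          assume a: "E v f"
          have "is_cycle V E (o1 # R1' @ [d, e] @ o2 # v # f # g # R2')"
            using C v ov sp a o2v unfolding cyc_char eqs by (auto simp: wk_Cons wk_append hd_append)
          then show False using long eqs by force
        qed
        have ne: "\<not> E v e" using sp(3) R1 by auto
        have zo2: "E (last (g # R2')) o2"
        proof -
          have "last R = last (g # R2')" using eqs by simp
          moreover have "last R \<in> set (o1 # R)" using Rne by simp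
          ultimately show ?thesis using H hl sp(2) by metis
        qed
        have dist: "distinct (o1 # R1' @ [d, e] @ o2 # f # g # R2')" using cR(2) eqs by simp
        have ef: "e \<noteq> f" using dist by auto
        have eV: "e \<in> V" and fV: "f \<in> V" using cR(3) eqs by auto
        show False
        proof (cases "E e f")
          case True
          have "is_cycle V E (o1 # R1' @ [d, e] @ f # g # R2' @ [o2, v])"
            using C v ov vo sp True zo2 o2v unfolding cyc_char eqs
            by (auto simp: wk_Cons wk_append hd_append)
          then show False using long eqs by force
        next
          case False
          from nested[OF eV fV ef False] show False
          proof
            assume N: "\<forall>x. E e x \<longrightarrow> E f x"
            have "E d e" using cR(4) unfolding eqs by (simp add: wk_Cons wk_append)
            then have df: "E d f" using N Esym by blast
            have "is_cycle V E (o1 # R1' @ [d] @ f # g # R2' @ [o2, v])"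
              using C v ov vo sp df zo2 o2v unfolding cyc_char eqs
              by (auto simp: wk_Cons wk_append hd_append)
            then show False using ok eqs by force
          next
            assume N: "\<forall>x. E f x \<longrightarrow> E e x"
            have "E f g" using cR(4) unfolding eqs by (simp add: wk_Cons wk_append)
            then have eg: "E e g" using N Esym by blast
            have "is_cycle V E (o1 # R1' @ [d, e] @ g # R2' @ [o2, v])"
              using C v ov vo sp eg zo2 o2v unfolding cyc_char eqs
              by (auto simp: wk_Cons wk_append hd_append)
            then show False using ok eqs by force
          qed
        qed
      qed
    qed
  next
    case False
    obtain u where u: "E v u" "u \<noteq> o1" using degree[OF v(1), of o1] by blast
    have uR: "u \<notin> set R" using False u by blast
    obtain c1 R' where R': "R = c1 # R'" using Rne by (cases R) auto
    then obtain c2 R0 where "R' = c2 # R0" using cR(1) by (cases R') auto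
    with R' have R: "R = c1 # c2 # R0" by simp
    have "\<not> E v c1" "\<not> E v c2" using False R by auto
    then have c1u: "E c1 u" and c2u: "E c2 u" using H u R by auto
    have uV: "u \<in> V" using u EV by blast
    have "is_cycle V E (o1 # c1 # u # c2 # R0)"
      using C uV uR u c1u c2u Esym[OF c2u] unfolding cyc_char R by (auto simp: wk_Cons)
    then show False using long R by force
  qed
qed

lemma main:
  assumes C: "is_cycle V E C"
    and lng: "\<forall>D. is_cycle V E D \<longrightarrow> length D \<le> length C"
    and v: "v \<in> V" "v \<notin> set C"
  shows "\<exists>D. is_cycle V E D \<and> length D = length C \<and> v \<in> set D"
proof (rule ccontr)
  assume nd: "\<not> ?thesis"
  have cC: "3 \<le> length C" "distinct C" "set C \<subseteq> V" using C by (simp_all add: cyc_char)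
  have H: "\<forall>t\<in>set C. \<not> E v t \<longrightarrow> (\<forall>x. E v x \<longrightarrow> E t x)"
  proof (intro ballI impI)
    fix t assume t: "t \<in> set C" "\<not> E v t"
    have tV: "t \<in> V" using t cC by auto
    have tv: "t \<noteq> v" using t v by auto
    have ntv: "\<not> E t v" using t Esym by blast
    from nested[OF tV v(1) tv ntv] show "\<forall>x. E v x \<longrightarrow> E t x"
    proof
      assume N: "\<forall>x. E t x \<longrightarrow> E v x"
      obtain xs ys where sp: "C = xs @ t # ys" using split_list[OF t(1)] by blast
      have c1: "is_cycle V E (t # ys @ xs)" using cyc_rot[of V E xs "t # ys"] C sp by simp
      have ne: "ys @ xs \<noteq> []" using cC sp by auto
      have a1: "E t (hd (ys @ xs))" using c1 ne unfolding cyc_char by (simp add: wk_Cons)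
      have a2: "E (last (ys @ xs)) t" using c1 ne unfolding cyc_char by (auto split: if_splits)
      have "is_cycle V E (v # ys @ xs)"
      proof (rule replace_front[OF c1 v(1)])
        show "v \<notin> set (ys @ xs)" using v sp by auto
        show "E v (hd (ys @ xs))" using a1 N by blast
        show "E (last (ys @ xs)) v" using a2 N Esym by blast
      qed
      then show ?thesis using nd sp by force
    qed
  qed
  show False
  proof (cases "\<forall>x\<in>set C. \<not> E v x")
    case True
    obtain u where u: "E v u" using degree[OF v(1), of v] by blast
    have uC: "u \<notin> set C" using True u by blast
    have uV: "u \<in> V" using u EV by blast
    obtain c0 C' where C': "C = c0 # C'" using cC by (cases C) auto
    then obtain c1 R where "C' = c1 # R" using cC by (cases C') auto
    with C' have CC: "C = c0 # c1 # R" by simp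
    have "E c0 u" "E c1 u" using H True u CC by auto
    then have "is_cycle V E (c0 # u # c1 # R)"
      using C uV uC Esym[of c1 u] unfolding cyc_char CC by (auto simp: wk_Cons)
    then show False using lng CC by force
  next
    case False
    then obtain o1 where o1: "o1 \<in> set C" "E v o1" by blast
    obtain xs ys where sp: "C = xs @ o1 # ys" using split_list[OF o1(1)] by blast
    have c1: "is_cycle V E (o1 # ys @ xs)" using cyc_rot[of V E xs "o1 # ys"] C sp by simp
    have "\<exists>D. is_cycle V E D \<and> length D = Suc (length (ys @ xs)) \<and> v \<in> set D"
    proof (rule main_front[OF c1])
      show "\<forall>D. is_cycle V E D \<longrightarrow> length D \<le> Suc (length (ys @ xs))" using lng sp by (simp add: add.commute)
      show "v \<in> V" using v by simp
      show "v \<notin> set (o1 # ys @ xs)" using v sp by auto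
      show "E v o1" using o1 by simp
      show "\<forall>t\<in>set (o1 # ys @ xs). \<not> E v t \<longrightarrow> (\<forall>x. E v x \<longrightarrow> E t x)" using H sp by auto
    qed
    then show False using nd sp by (simp add: add.commute)
  qed
qed

end

theorem theorem12:
  fixes V :: "'a set" and E :: "'a \<Rightarrow> 'a \<Rightarrow> bool"
  assumes "simple_graph V E"
    and "two_connected V E"
    and "\<not> has_induced_P4 V E"
    and "\<not> has_induced_2K2 V E"
  shows "cummerbund_covered V E"
proof -
  have fin: "finite V" using assms(1) unfolding simple_graph_def by blast
  obtain C0 where C0: "is_cycle V E C0" using has_cycle[OF assms] by blast
  have bnd: "\<forall>y. is_cycle V E y \<longrightarrow> length y < Suc (card V)"
    using cyc_len_card[OF fin] by (simp add: less_Suc_eq_le)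
  obtain C where C: "is_cycle V E C" and lng: "\<forall>D. is_cycle V E D \<longrightarrow> length D \<le> length C"
    using ex_has_greatest_nat[of "is_cycle V E" C0 length "Suc (card V)", OF C0 bnd] by blast
  show ?thesis
    unfolding cummerbund_covered_def
  proof
    fix v assume v: "v \<in> V"
    show "\<exists>cs. cummerbund V E cs \<and> v \<in> set cs"
    proof (cases "v \<in> set C")
      case True
      then show ?thesis using C lng unfolding cummerbund_def by blast
    next
      case False
      then obtain D where "is_cycle V E D" "length D = length C" "v \<in> set D"
        using main[OF assms C lng v] by blast
      then show ?thesis using lng unfolding cummerbund_def by auto
    qed
  qed
qed

end
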